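(* Let $(M,\phi)$ be a regular base system and suppose there is $\kappa\ge 1$ with $\|D\phi^{-1}\|_{C^0(M)}:=\sup_{x\in M}\|D_x\phi^{-1}\|_{\mathrm{op}}\le\kappa$. Let $\omega: M\to\mathbb{R}$ be $C^2$ and let $F:\mathbb{R}^N\times\mathbb{R}\to\mathbb{R}^N$ be $C^2$. If $F$ satisfies the echo state property with rate $\rho<1/\kappa$ on $U=\omega(M)$, then the synchronization function $f: M\to\mathbb{R}^N$ of the driven system (which exists and is unique under these hypotheses) is $C^1$. In particular, weak (continuous but non-differentiable) generalized synchronization does not arise.
   Context: A regular base system is a pair $(M,\phi)$ such that either (i) $M=S^1=\mathbb{R}/\mathbb{Z}$ and $\phi$ is $C^2$-conjugate (via a $C^2$ diffeomorphism of $S^1$) to an irrational rotation $\theta\mapsto\theta+\alpha \pmod 1$, $\alpha\notin\mathbb{Q}$; or (ii) $M=T^k=\mathbb{R}^k/\mathbb{Z}^k$ and $\phi$ is $C^2$-conjugate to a translation $\boldsymbol\theta\mapsto\boldsymbol\theta+\boldsymbol\alpha \pmod{\mathbb{Z}^k}$ with $\{1,\alpha_1,\dots,\alpha_k\}$ rationally independent. Norms on $M$ are with respect to the standard flat metric. The driven (skew-product) system is $\Psi(x,h)=(\phi(x),F(h,\omega(x)))$ on $M\times\mathbb{R}^N$, i.e. $h_{t+1}=F(h_t,u_t)$ with $u_t=\omega(\phi^t(x_0))$. Echo state property (ESP) with rate $\rho<1$ on a compact input set $U\subset\mathbb{R}$: there is a compact $K\subset\mathbb{R}^N$ with $F(K,u)\subseteq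 K$ for all $u\in U$ and $\sup_{(h,u)\in K\times U}\|\partial_hF(h,u)\|_{\mathrm{op}}\le\rho$. A synchronization function is a continuous $f:M\to\mathbb{R}^N$ such that (a) $f(\phi(x))=F(f(x),\omega(x))$ for all $x\in M$, and (b) for every $x_0\in M$ and every $h_0\in K$, the trajectory $h_t$ of $h_{t+1}=F(h_t,\omega(\phi^t(x_0)))$ satisfies $\|h_t-f(\phi^t(x_0))\|\to0$ as $t\to\infty$. *)

theory Defs
  imports "HOL-Analysis.Analysis"
begin

text \<open>The torus T^k = R^k / Z^k is modelled through lifts: points are vectors in
  real^'k, two vectors represent the same point iff they differ by an integer vector.
  S^1 is the case CARD('k) = 1.\<close>

definition tequiv :: "real^'k \<Rightarrow> real^'k \<Rightarrow> bool" where
  "tequiv x y \<longleftrightarrow> (\<forall>i. x$i - y$i \<in> \<int>)"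

definition torus_map :: "(real^'k \<Rightarrow> real^'k) \<Rightarrow> bool" where
  "torus_map P \<longleftrightarrow> (\<forall>x y. tequiv x y \<longrightarrow> tequiv (P x) (P y))"

definition torus_fun :: "(real^'k \<Rightarrow> 'b) \<Rightarrow> bool" where
  "torus_fun g \<longleftrightarrow> (\<forall>x y. tequiv x y \<longrightarrow> g x = g y)"

definition C1_map :: "('a::euclidean_space \<Rightarrow> 'b::euclidean_space) \<Rightarrow> bool" where
  "C1_map f \<longleftrightarrow> (\<exists>f'. (\<forall>x. (f has_derivative blinfun_apply (f' x)) (at x))
                       \<and> continuous_on UNIV f')"

definition C2_map :: "('a::euclidean_space \<Rightarrow> 'b::euclidean_space) \<Rightarrow> bool" where
  "C2_map f \<longleftrightarrow> (\<exists>f' f''. (\<forall>x. (f has_derivative blinfun_apply (f' x)) (at x))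
                       \<and> (\<forall>x. (f' has_derivative blinfun_apply (f'' x)) (at x))
                       \<and> continuous_on UNIV f'')"

definition torus_C2_diffeo :: "(real^'k \<Rightarrow> real^'k) \<Rightarrow> bool" where
  "torus_C2_diffeo H \<longleftrightarrow> torus_map H \<and> C2_map H \<and>
     (\<exists>G. torus_map G \<and> C2_map G \<and> (\<forall>x. tequiv (G (H x)) x \<and> tequiv (H (G x)) x))"

definition rat_indep :: "real^'k \<Rightarrow> bool" where
  "rat_indep \<alpha> \<longleftrightarrow> (\<forall>(c0::rat) (c::'k \<Rightarrow> rat).
      of_rat c0 + (\<Sum>i\<in>UNIV. of_rat (c i) * \<alpha>$i) = 0 \<longrightarrow> c0 = 0 \<and> (\<forall>i. c i = 0))"

text \<open>(T^k, phi) is a regular base system; Phi is a lift of phi. phi = h o R_alpha o h^-1.\<close>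
definition regular_base_system :: "(real^'k \<Rightarrow> real^'k) \<Rightarrow> bool" where
  "regular_base_system Phi \<longleftrightarrow> torus_map Phi \<and>
     (\<exists>H G \<alpha>. torus_C2_diffeo H \<and> torus_map G \<and>
        (\<forall>x. tequiv (G (H x)) x \<and> tequiv (H (G x)) x) \<and>
        rat_indep \<alpha> \<and> (\<forall>x. tequiv (Phi x) (H (G x + \<alpha>))))"

definition ESP :: "((real^'n) \<times> real \<Rightarrow> real^'n) \<Rightarrow> real set \<Rightarrow> real \<Rightarrow> (real^'n) set \<Rightarrow> bool" where
  "ESP F U \<rho> K \<longleftrightarrow> \<rho> < 1 \<and> compact K \<and> K \<noteq> {} \<and>
     (\<forall>u\<in>U. \<forall>h\<in>K. F (h, u) \<in> K) \<and>
     (\<forall>h\<in>K. \<forall>u\<in>U. onorm (frechet_derivative (\<lambda>h'. F (h', u)) (at h)) \<le> \<rho>)"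

primrec traj :: "(real^'k \<Rightarrow> real^'k) \<Rightarrow> (real^'k \<Rightarrow> real) \<Rightarrow> ((real^'n) \<times> real \<Rightarrow> real^'n)
                  \<Rightarrow> real^'k \<Rightarrow> real^'n \<Rightarrow> nat \<Rightarrow> real^'n" where
  "traj Phi w F x0 h0 0 = h0"
| "traj Phi w F x0 h0 (Suc t) = F (traj Phi w F x0 h0 t, w ((Phi ^^ t) x0))"

definition sync_function :: "(real^'k \<Rightarrow> real^'k) \<Rightarrow> (real^'k \<Rightarrow> real) \<Rightarrow> ((real^'n) \<times> real \<Rightarrow> real^'n)
       \<Rightarrow> (real^'n) set \<Rightarrow> (real^'k \<Rightarrow> real^'n) \<Rightarrow> bool" where
  "sync_function Phi w F K f \<longleftrightarrow> torus_fun f \<and> continuous_on UNIV f \<and>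
     (\<forall>x. f (Phi x) = F (f x, w x)) \<and>
     (\<forall>x0. \<forall>h0\<in>K. (\<lambda>t. norm (traj Phi w F x0 h0 t - f ((Phi ^^ t) x0))) \<longlonglongrightarrow> 0)"

end

theory Submission imports Defs begin

lemma tequiv_refl[simp]: "tequiv x x" by (simp add: tequiv_def)
lemma tequiv_sym: "tequiv x y \<Longrightarrow> tequiv y x"
  unfolding tequiv_def proof (intro allI)
  fix i assume "\<forall>i. x $ i - y $ i \<in> \<int>"
  then have "- (x $ i - y $ i) \<in> \<int>" by (intro Ints_minus) blast
  then show "y $ i - x $ i \<in> \<int>" by simp
qed
lemma tequiv_trans: "tequiv x y \<Longrightarrow> tequiv y z \<Longrightarrow> tequiv x z"
  unfolding tequiv_def proof (intro allI)
  fix i assume "\<forall>i. x $ i - y $ i \<in> \<int>" "\<forall>i. y $ i - z $ i \<in> \<int>"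
  then have "(x $ i - y $ i) + (y $ i - z $ i) \<in> \<int>" by (intro Ints_add) blast+
  then show "x $ i - z $ i \<in> \<int>" by simp
qed
lemma tequiv_add: "tequiv x y \<Longrightarrow> tequiv (x + a) (y + a)"
  unfolding tequiv_def by simp
lemma tequiv_diff: "tequiv x y \<Longrightarrow> tequiv (x - a) (y - a)"
  unfolding tequiv_def by simp
lemma torus_mapD: "torus_map P \<Longrightarrow> tequiv x y \<Longrightarrow> tequiv (P x) (P y)"
  unfolding torus_map_def by blast
lemma torus_funD: "torus_fun g \<Longrightarrow> tequiv x y \<Longrightarrow> g x = g y"
  unfolding torus_fun_def by blast

definition fv :: "real^'k \<Rightarrow> real^'k" where "fv x = (\<chi> i. frac (x$i))"

lemma tequiv_fv: "tequiv x (fv x)"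
  unfolding tequiv_def fv_def by (simp add: frac_def)

lemma fv_in: "fv x \<in> cbox 0 1"
  unfolding fv_def by (auto simp: mem_box_cart frac_lt_1 less_imp_le)

lemma torus_fun_range: "torus_fun g \<Longrightarrow> range g = g ` cbox 0 1"
proof
  assume g: "torus_fun g"
  show "range g \<subseteq> g ` cbox 0 1"
  proof
    fix y assume "y \<in> range g"
    then obtain x where "y = g x" by blast
    then have "y = g (fv x)" using torus_funD[OF g tequiv_fv] by simp
    then show "y \<in> g ` cbox 0 1" using fv_in by blast
  qed
qed blast

lemma torus_fun_compact_range:
  assumes "torus_fun g" "continuous_on UNIV g"
  shows "compact (range g)"
  unfolding torus_fun_range[OF assms(1)]
  by (rule compact_continuous_image[OF continuous_on_subset[OF assms(2)] compact_cbox]) simp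

lemma torus_fun_deriv:
  fixes g :: "real^'k \<Rightarrow> 'b::real_normed_vector"
  assumes g: "torus_fun g" and d: "\<And>x. (g has_derivative blinfun_apply (g' x)) (at x)"
    and e: "tequiv y z"
  shows "g' y = g' z"
proof -
  define d where "d = z - y"
  have per: "g (x + d) = g x" for x
  proof -
    have "tequiv (x + d) x" unfolding tequiv_def d_def
    proof
      fix i
      have "z $ i - y $ i \<in> \<int>" using tequiv_sym[OF e] unfolding tequiv_def by blast
      then show "(x + (z - y)) $ i - x $ i \<in> \<int>" by simp
    qed
    then show ?thesis using g unfolding torus_fun_def by blast
  qed
  have "((\<lambda>x. g (x + d)) has_derivative blinfun_apply (g' (y + d))) (at y)"
    using has_derivative_compose[OF has_derivative_add_const[OF has_derivative_ident[of "at y"], of d] d[of "y+d"]]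
    by (simp add: o_def)
  moreover have "(\<lambda>x. g (x + d)) = g" using per by auto
  ultimately have h1: "(g has_derivative blinfun_apply (g' (y + d))) (at y)" by simp
  have "blinfun_apply (g' (y+d)) = blinfun_apply (g' y)"
    by (rule has_derivative_unique[OF h1 d[of y]])
  then have "g' (y + d) = g' y" by (simp add: blinfun_apply_inject)
  moreover have "y + d = z" unfolding d_def by simp
  ultimately show ?thesis by simp
qed

lemma blinfun_compose_fun: "blinfun_apply (a o\<^sub>L b) = (\<lambda>c. blinfun_apply a (blinfun_apply b c))"
  by auto

lemma C2_imp_C1:
  assumes "C2_map H"
  shows "\<exists>H'. (\<forall>x. (H has_derivative blinfun_apply (H' x)) (at x)) \<and> continuous_on UNIV H'"
proof -
  obtain H' H'' where d: "\<forall>x. (H has_derivative blinfun_apply (H' x)) (at x)"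
    and d2: "\<forall>x. (H' has_derivative blinfun_apply (H'' x)) (at x)"
    using assms unfolding C2_map_def by blast
  have "continuous_on UNIV H'"
    by (intro continuous_at_imp_continuous_on ballI has_derivative_continuous[OF d2[rule_format]])
  with d show ?thesis by blast
qed

lemma C1_cont:
  assumes "\<forall>x. (H has_derivative H' x) (at x)"
  shows "continuous_on UNIV H"
  by (intro continuous_at_imp_continuous_on ballI has_derivative_continuous[OF assms[rule_format]])

lemma base_setup:
  fixes Phi Psi :: "real^'k \<Rightarrow> real^'k"
  assumes rb: "regular_base_system Phi"
    and tPsi: "torus_map Psi" and inv1: "\<forall>x. tequiv (Psi (Phi x)) x"
    and dPsi: "\<forall>x. Psi differentiable (at x)"
  shows "\<exists>Q Psi'. continuous_on UNIV Q \<and> torus_map Q \<and> (\<forall>x. tequiv (Phi x) (Q x))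
     \<and> (\<forall>x. (Psi has_derivative blinfun_apply (Psi' x)) (at x)) \<and> continuous_on UNIV Psi'"
proof -
  obtain H G \<alpha> where tPhi: "torus_map Phi" and H: "torus_C2_diffeo H" and tG: "torus_map G"
    and GH: "\<forall>x. tequiv (G (H x)) x \<and> tequiv (H (G x)) x"
    and Ph: "\<forall>x. tequiv (Phi x) (H (G x + \<alpha>))"
    using rb unfolding regular_base_system_def by blast
  obtain G2 where tH: "torus_map H" and cH: "C2_map H" and tG2: "torus_map G2" and cG2: "C2_map G2"
    and G2H: "\<forall>x. tequiv (G2 (H x)) x \<and> tequiv (H (G2 x)) x"
    using H unfolding torus_C2_diffeo_def by blast
  obtain H' where dH: "\<forall>x. (H has_derivative blinfun_apply (H' x)) (at x)" and cH': "continuous_on UNIV H'"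
    using C2_imp_C1[OF cH] by blast
  obtain G2' where dG2: "\<forall>x. (G2 has_derivative blinfun_apply (G2' x)) (at x)" and cG2': "continuous_on UNIV G2'"
    using C2_imp_C1[OF cG2] by blast
  have contH: "continuous_on UNIV H" using C1_cont[OF dH] .
  have contG2: "continuous_on UNIV G2" using C1_cont[OF dG2] .
  have GG2: "tequiv (G x) (G2 x)" for x
  proof -
    have a: "tequiv (G2 (H (G x))) (G2 x)" using torus_mapD[OF tG2] GH by blast
    have b: "tequiv (G2 (H (G x))) (G x)" using G2H by blast
    show ?thesis by (rule tequiv_trans[OF tequiv_sym[OF b] a])
  qed
  define Q where "Q x = H (G2 x + \<alpha>)" for x
  have cQ: "continuous_on UNIV Q" unfolding Q_def
    by (intro continuous_on_compose2[OF contH] continuous_intros contG2) auto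
  have tQ: "torus_map Q" unfolding Q_def torus_map_def
    using torus_mapD[OF tH tequiv_add[OF torus_mapD[OF tG2]]] by blast
  have PQ: "tequiv (Phi x) (Q x)" for x
    unfolding Q_def using tequiv_trans[OF Ph[rule_format] torus_mapD[OF tH tequiv_add[OF GG2]]] .
  define P where "P x = H (G2 x - \<alpha>)" for x
  define P' where "P' x = H' (G2 x - \<alpha>) o\<^sub>L G2' x" for x
  have dP: "(P has_derivative blinfun_apply (P' x)) (at x)" for x
  proof -
    have "((\<lambda>x. G2 x - \<alpha>) has_derivative blinfun_apply (G2' x)) (at x)"
      using has_derivative_diff[OF dG2[rule_format, of x] has_derivative_const[of \<alpha>]] by simp
    from has_derivative_compose[OF this dH[rule_format]]
    show ?thesis unfolding P_def P'_def blinfun_compose_fun by (simp add: o_def)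
  qed
  have cP': "continuous_on UNIV P'" unfolding P'_def
    by (intro continuous_intros continuous_on_compose2[OF cH'] contG2 cG2') auto
  have contP: "continuous_on UNIV P" using C1_cont[of P "\<lambda>x. blinfun_apply (P' x)"] dP by blast
  have PhiP: "tequiv (Phi (P x)) x" for x
  proof -
    have "tequiv (G2 (P x)) (G2 x - \<alpha>)" unfolding P_def using G2H by blast
    then have "tequiv (G (P x)) (G2 x - \<alpha>)"
      by (rule tequiv_trans[OF GG2])
    then have "tequiv (G (P x) + \<alpha>) (G2 x - \<alpha> + \<alpha>)"
      by (rule tequiv_add)
    then have "tequiv (G (P x) + \<alpha>) (G2 x)" by simp
    then have "tequiv (H (G (P x) + \<alpha>)) (H (G2 x))" by (rule torus_mapD[OF tH])
    moreover have "tequiv (H (G2 x)) x" using G2H by blast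
    ultimately have "tequiv (H (G (P x) + \<alpha>)) x" by (rule tequiv_trans)
    then show ?thesis by (rule tequiv_trans[OF Ph[rule_format, of "P x"]])
  qed
  have PsiP: "tequiv (Psi x) (P x)" for x
  proof -
    have b: "tequiv (Psi (Phi (P x))) (Psi x)" by (rule torus_mapD[OF tPsi PhiP])
    have a: "tequiv (Psi (Phi (P x))) (P x)" using inv1 by blast
    show ?thesis by (rule tequiv_trans[OF tequiv_sym[OF b] a])
  qed
  have contPsi: "continuous_on UNIV Psi"
    by (intro continuous_at_imp_continuous_on ballI differentiable_imp_continuous_within dPsi[rule_format])
  have const: "Psi x $ i - P x $ i = Psi 0 $ i - P 0 $ i" for x i
  proof -
    have "(\<lambda>x. Psi x $ i - P x $ i) constant_on UNIV"
    proof (rule continuous_discrete_range_constant)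
      show "continuous_on UNIV (\<lambda>x. Psi x $ i - P x $ i)"
        by (intro continuous_on_diff continuous_on_component contPsi contP)
      fix x :: "real^'k"
      show "\<exists>e>0. \<forall>y. y \<in> UNIV \<and> Psi y $ i - P y $ i \<noteq> Psi x $ i - P x $ i \<longrightarrow>
              e \<le> norm (Psi y $ i - P y $ i - (Psi x $ i - P x $ i))"
      proof (intro exI[of _ 1] conjI allI impI)
        fix y assume "y \<in> UNIV \<and> Psi y $ i - P y $ i \<noteq> Psi x $ i - P x $ i"
        then have nz: "Psi y $ i - P y $ i - (Psi x $ i - P x $ i) \<noteq> 0" by simp
        have a: "Psi y $ i - P y $ i \<in> \<int>" using PsiP[of y] unfolding tequiv_def by blast
        have b: "Psi x $ i - P x $ i \<in> \<int>" using PsiP[of x] unfolding tequiv_def by blast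
        have "Psi y $ i - P y $ i - (Psi x $ i - P x $ i) \<in> \<int>" by (rule Ints_diff[OF a b])
        from Ints_nonzero_abs_ge1[OF this nz]
        show "1 \<le> norm (Psi y $ i - P y $ i - (Psi x $ i - P x $ i))"
          by (simp only: real_norm_def)
      qed simp
    qed (simp add: connected_UNIV)
    then obtain c where "\<forall>x\<in>UNIV. Psi x $ i - P x $ i = c" unfolding constant_on_def by blast
    then show ?thesis by simp
  qed
  have PsiPc: "Psi = (\<lambda>x. P x + (Psi 0 - P 0))"
  proof (rule ext)
    fix x
    show "Psi x = P x + (Psi 0 - P 0)"
    proof (rule vec_eq_iff[THEN iffD2], rule allI)
      fix i
      from const[of x i] show "Psi x $ i = (P x + (Psi 0 - P 0)) $ i" by simp
    qed
  qed
  have "(Psi has_derivative blinfun_apply (P' x)) (at x)" for x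
    by (subst PsiPc, rule has_derivative_add_const, rule dP)
  then show ?thesis
    apply (intro exI[of _ Q] exI[of _ P'])
    using cQ tQ PQ cP' by blast
qed

definition embL :: "'a::real_normed_vector \<Rightarrow>\<^sub>L ('a \<times> 'b::real_normed_vector)" where
  "embL = Blinfun (\<lambda>v. (v, 0))"
definition embR :: "'b::real_normed_vector \<Rightarrow>\<^sub>L ('a::real_normed_vector \<times> 'b)" where
  "embR = Blinfun (\<lambda>v. (0, v))"
definition pairL :: "('c::real_normed_vector \<Rightarrow>\<^sub>L 'a::real_normed_vector) \<Rightarrow> ('c \<Rightarrow>\<^sub>L 'b::real_normed_vector) \<Rightarrow> ('c \<Rightarrow>\<^sub>L ('a \<times> 'b))" where
  "pairL X Y = (embL o\<^sub>L X) + (embR o\<^sub>L Y)"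

lemma embL_apply[simp]: "blinfun_apply embL v = (v, 0)"
  unfolding embL_def
  by (subst bounded_linear_Blinfun_apply) (auto intro!: bounded_linear_Pair bounded_linear_ident bounded_linear_zero)
lemma embR_apply[simp]: "blinfun_apply embR v = (0, v)"
  unfolding embR_def
  by (subst bounded_linear_Blinfun_apply) (auto intro!: bounded_linear_Pair bounded_linear_ident bounded_linear_zero)
lemma pairL_apply[simp]: "blinfun_apply (pairL X Y) v = (blinfun_apply X v, blinfun_apply Y v)"
  unfolding pairL_def by (simp add: blinfun.add_left)

lemma norm_embL: "norm (embL :: 'a::real_normed_vector \<Rightarrow>\<^sub>L ('a \<times> 'b::real_normed_vector)) \<le> 1"
  by (rule norm_blinfun_bound) (auto simp: norm_Pair)

lemma Pair_split_apply: "blinfun_apply A (a, b) = blinfun_apply A (a, 0) + blinfun_apply A (0, b)"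
  by (metis add.right_neutral add_Pair blinfun.add_right add.left_neutral)

lemma norm_blinfun2: "norm (blinfun_apply X (blinfun_apply P v)) \<le> norm X * (norm P * norm v)"
  by (meson norm_blinfun norm_ge_zero order_trans mult_left_mono)

lemma norm_comp_pair_bound:
  fixes A :: "('a::real_normed_vector \<times> 'b::real_normed_vector) \<Rightarrow>\<^sub>L 'c::real_normed_vector"
  shows "norm ((A o\<^sub>L pairL X Y) o\<^sub>L P) \<le> norm P * (norm (A o\<^sub>L embL) * norm X + norm A * norm Y)"
proof (rule norm_blinfun_bound)
  show "0 \<le> norm P * (norm (A o\<^sub>L embL) * norm X + norm A * norm Y)" by simp
  fix v
  have e: "blinfun_apply ((A o\<^sub>L pairL X Y) o\<^sub>L P) v = (A o\<^sub>L embL) (X (P v)) + A (0, Y (P v))"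
    using Pair_split_apply[of A "X (P v)" "Y (P v)"] by simp
  have n1: "norm ((A o\<^sub>L embL) (X (P v))) \<le> norm (A o\<^sub>L embL) * (norm X * (norm P * norm v))"
    by (rule order_trans[OF norm_blinfun mult_left_mono[OF norm_blinfun2]]) simp
  have "norm (A (0, Y (P v))) \<le> norm A * norm (Y (P v))"
    using norm_blinfun[of A "(0, Y (P v))"] by (simp add: norm_Pair)
  also have "\<dots> \<le> norm A * (norm Y * (norm P * norm v))"
    by (rule mult_left_mono[OF norm_blinfun2]) simp
  finally have n2: "norm (A (0, Y (P v))) \<le> norm A * (norm Y * (norm P * norm v))" .
  have "norm (blinfun_apply ((A o\<^sub>L pairL X Y) o\<^sub>L P) v)
     \<le> norm (A o\<^sub>L embL) * (norm X * (norm P * norm v)) + norm A * (norm Y * (norm P * norm v))"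
    unfolding e by (rule order_trans[OF norm_triangle_ineq add_mono[OF n1 n2]])
  also have "\<dots> = norm P * (norm (A o\<^sub>L embL) * norm X + norm A * norm Y) * norm v"
    by (simp add: algebra_simps)
  finally show "norm (blinfun_apply ((A o\<^sub>L pairL X Y) o\<^sub>L P) v) \<le> norm P * (norm (A o\<^sub>L embL) * norm X + norm A * norm Y) * norm v" .
qed

lemma norm_comp_pair_diff:
  fixes A B :: "('a::real_normed_vector \<times> 'b::real_normed_vector) \<Rightarrow>\<^sub>L 'c::real_normed_vector"
  shows "norm (((A o\<^sub>L pairL X1 Y) o\<^sub>L P) - ((B o\<^sub>L pairL X2 Y) o\<^sub>L P))
     \<le> norm P * (norm (A o\<^sub>L embL) * norm (X1 - X2) + norm (A - B) * (norm X2 + norm Y))"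
proof (rule norm_blinfun_bound)
  show "0 \<le> norm P * (norm (A o\<^sub>L embL) * norm (X1 - X2) + norm (A - B) * (norm X2 + norm Y))" by simp
  fix v
  have e1: "A (X1 (P v), Y (P v)) - B (X2 (P v), Y (P v))
      = A (X1 (P v) - X2 (P v), 0) + (A (X2 (P v), Y (P v)) - B (X2 (P v), Y (P v)))"
    using Pair_split_apply[of A "X1 (P v)" "Y (P v)"] Pair_split_apply[of A "X2 (P v)" "Y (P v)"]
      blinfun.diff_right[of A "(X1 (P v), 0)" "(X2 (P v), 0)"]
    by (simp add: algebra_simps)
  have e: "blinfun_apply (((A o\<^sub>L pairL X1 Y) o\<^sub>L P) - ((B o\<^sub>L pairL X2 Y) o\<^sub>L P)) v
      = (A o\<^sub>L embL) ((X1 - X2) (P v)) + (A - B) (X2 (P v), Y (P v))"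
    using e1 by (simp add: blinfun.diff_left)
  have n1: "norm ((A o\<^sub>L embL) ((X1 - X2) (P v))) \<le> norm (A o\<^sub>L embL) * (norm (X1 - X2) * (norm P * norm v))"
    by (rule order_trans[OF norm_blinfun mult_left_mono[OF norm_blinfun2]]) simp
  have "norm ((A - B) (X2 (P v), Y (P v))) \<le> norm (A - B) * norm (X2 (P v), Y (P v))"
    by (rule norm_blinfun)
  also have "\<dots> \<le> norm (A - B) * (norm (X2 (P v)) + norm (Y (P v)))"
    by (rule mult_left_mono[OF norm_Pair_le]) simp
  also have "\<dots> \<le> norm (A - B) * (norm X2 * (norm P * norm v) + norm Y * (norm P * norm v))"
    by (rule mult_left_mono[OF add_mono[OF norm_blinfun2 norm_blinfun2]]) simp
  finally have n2: "norm ((A - B) (X2 (P v), Y (P v))) \<le> norm (A - B) * (norm X2 * (norm P * norm v) + norm Y * (norm P * norm v))" .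
  have "norm (blinfun_apply (((A o\<^sub>L pairL X1 Y) o\<^sub>L P) - ((B o\<^sub>L pairL X2 Y) o\<^sub>L P)) v)
      \<le> norm (A o\<^sub>L embL) * (norm (X1 - X2) * (norm P * norm v)) + norm (A - B) * (norm X2 * (norm P * norm v) + norm Y * (norm P * norm v))"
    unfolding e by (rule order_trans[OF norm_triangle_ineq add_mono[OF n1 n2]])
  also have "\<dots> = norm P * (norm (A o\<^sub>L embL) * norm (X1 - X2) + norm (A - B) * (norm X2 + norm Y)) * norm v"
    by (simp add: algebra_simps)
  finally show "norm (blinfun_apply (((A o\<^sub>L pairL X1 Y) o\<^sub>L P) - ((B o\<^sub>L pairL X2 Y) o\<^sub>L P)) v)
     \<le> norm P * (norm (A o\<^sub>L embL) * norm (X1 - X2) + norm (A - B) * (norm X2 + norm Y)) * norm v" .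
qed

locale SS =
  fixes Phi Psi :: "real^'k \<Rightarrow> real^'k" and w :: "real^'k \<Rightarrow> real"
    and F :: "(real^'n) \<times> real \<Rightarrow> real^'n" and \<kappa> \<rho> :: real and K :: "(real^'n) set"
    and f :: "real^'k \<Rightarrow> real^'n" and Q :: "real^'k \<Rightarrow> real^'k"
    and Psi' :: "real^'k \<Rightarrow> ((real^'k) \<Rightarrow>\<^sub>L (real^'k))" and w' :: "real^'k \<Rightarrow> ((real^'k) \<Rightarrow>\<^sub>L real)"
    and F' :: "(real^'n) \<times> real \<Rightarrow> (((real^'n) \<times> real) \<Rightarrow>\<^sub>L (real^'n))"
  assumes tPhi: "torus_map Phi" and tPsi: "torus_map Psi"
    and PsiPhi: "\<And>x. tequiv (Psi (Phi x)) x" and PhiPsi: "\<And>x. tequiv (Phi (Psi x)) x"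
    and dPsi: "\<And>x. (Psi has_derivative blinfun_apply (Psi' x)) (at x)" and cPsi': "continuous_on UNIV Psi'"
    and nPsi': "\<And>x. norm (Psi' x) \<le> \<kappa>" and kappa: "\<kappa> \<ge> 1"
    and tw: "torus_fun w" and dw: "\<And>x. (w has_derivative blinfun_apply (w' x)) (at x)"
    and cw': "continuous_on UNIV w'"
    and dF: "\<And>p. (F has_derivative blinfun_apply (F' p)) (at p)" and cF': "continuous_on UNIV F'"
    and esp: "ESP F (range w) \<rho> K" and rho: "\<rho> < 1/\<kappa>"
    and sync: "sync_function Phi w F K f"
    and cQ: "continuous_on UNIV Q" and tQ: "torus_map Q" and PhiQ: "\<And>x. tequiv (Phi x) (Q x)"
begin

lemma K_compact: "compact K" and K_ne: "K \<noteq> {}"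
  and K_inv: "h \<in> K \<Longrightarrow> u \<in> range w \<Longrightarrow> F (h, u) \<in> K"
  and esp_bound: "h \<in> K \<Longrightarrow> u \<in> range w \<Longrightarrow> onorm (frechet_derivative (\<lambda>h'. F (h', u)) (at h)) \<le> \<rho>"
  using esp unfolding ESP_def by blast+

definition h0 where "h0 = (SOME h. h \<in> K)"
lemma h0_in: "h0 \<in> K" unfolding h0_def using K_ne some_in_eq by blast

lemma cw: "continuous_on UNIV w" using C1_cont[of w "\<lambda>x. blinfun_apply (w' x)"] dw by blast
lemma cF: "continuous_on UNIV F" using C1_cont[of F "\<lambda>x. blinfun_apply (F' x)"] dF by blast
lemma cPsi: "continuous_on UNIV Psi" using C1_cont[of Psi "\<lambda>x. blinfun_apply (Psi' x)"] dPsi by blast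
lemma Wc: "compact (range w)" by (rule torus_fun_compact_range[OF tw cw])

lemma tf: "torus_fun f" and cf: "continuous_on UNIV f" and fPhi: "\<And>x. f (Phi x) = F (f x, w x)"
  and conv: "\<And>x0 h. h \<in> K \<Longrightarrow> (\<lambda>t. norm (traj Phi w F x0 h t - f ((Phi ^^ t) x0))) \<longlonglongrightarrow> 0"
  using sync unfolding sync_function_def by blast+

lemma fPsi: "f x = F (f (Psi x), w (Psi x))"
proof -
  have "f (Phi (Psi x)) = f x" by (rule torus_funD[OF tf PhiPsi])
  then show ?thesis using fPhi[of "Psi x"] by simp
qed

lemma partial_deriv: "((\<lambda>h'. F (h', u)) has_derivative blinfun_apply (F' (h, u) o\<^sub>L embL)) (at h)"
proof -
  have "((\<lambda>h'. (h', u)) has_derivative (\<lambda>v. (v, 0))) (at h)"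
    by (intro has_derivative_Pair has_derivative_ident has_derivative_const)
  from has_derivative_compose[OF this dF]
  show ?thesis unfolding blinfun_compose_fun embL_apply by (simp add: o_def)
qed

lemma Fh_bound: "h \<in> K \<Longrightarrow> u \<in> range w \<Longrightarrow> norm (F' (h, u) o\<^sub>L embL) \<le> \<rho>"
  using esp_bound[of h u] frechet_derivative_at[OF partial_deriv[of u h]]
  by (simp add: norm_blinfun.rep_eq)

lemma rho_nonneg: "0 \<le> \<rho>"
  using Fh_bound[OF h0_in, of "w 0"] norm_ge_zero order_trans by blast

lemma kappa_pos: "\<kappa> > 0" using kappa by simp

lemma c_lt1: "\<kappa> * \<rho> < 1"
  using rho kappa_pos by (simp add: pos_less_divide_eq mult.commute)

lemma rho_lt1: "\<rho> < 1"
proof -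
  have "\<rho> \<le> \<kappa> * \<rho>" using kappa rho_nonneg mult_right_mono[of 1 \<kappa> \<rho>] by simp
  then show ?thesis using c_lt1 by simp
qed

definition \<rho>2 where "\<rho>2 = (1 + \<rho>) / 2"
lemma rho2: "0 \<le> \<rho>2" "\<rho>2 < 1" "\<rho> \<le> \<rho>2"
  unfolding \<rho>2_def using rho_nonneg rho_lt1 by auto

lemma nbhd: "\<exists>\<epsilon>>0. \<forall>a\<in>K. \<forall>b. dist b a < \<epsilon> \<longrightarrow> (\<forall>u\<in>range w. norm (F' (b, u) o\<^sub>L embL) \<le> \<rho>2)"
proof -
  define S where "S = (\<lambda>p. fst p + snd p) ` (K \<times> cball (0::real^'n) 1)"
  have "compact S" unfolding S_def
    by (intro compact_continuous_image compact_Times K_compact compact_cball continuous_intros)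
  define T where "T = S \<times> range w"
  have cT: "compact T" unfolding T_def by (intro compact_Times \<open>compact S\<close> Wc)
  have "uniformly_continuous_on T F'"
    by (rule compact_uniformly_continuous[OF continuous_on_subset[OF cF'] cT]) simp
  moreover have "(1 - \<rho>) / 2 > 0" using rho_lt1 by simp
  ultimately obtain d where d: "d > 0"
    and dd: "\<And>x x'. x \<in> T \<Longrightarrow> x' \<in> T \<Longrightarrow> dist x' x < d \<Longrightarrow> dist (F' x') (F' x) < (1 - \<rho>) / 2"
    unfolding uniformly_continuous_on_def by metis
  show ?thesis
  proof (intro exI[of _ "min d 1"] conjI ballI allI impI)
    show "min d 1 > 0" using d by simp
    fix a b u assume a: "a \<in> K" and ab: "dist b a < min d 1" and u: "u \<in> range w"
    have aT: "(a, u) \<in> T" unfolding T_def S_def using a u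
      by (auto intro!: image_eqI[of _ _ "(a, 0)"])
    have "norm (b - a) \<le> 1" using ab by (simp add: dist_norm)
    then have bT: "(b, u) \<in> T" unfolding T_def S_def using a u
      by (auto intro!: image_eqI[of _ _ "(a, b - a)"] simp: dist_norm norm_minus_commute)
    have "dist (b, u) (a, u) < d" using ab by (simp add: dist_Pair_Pair)
    then have dF'': "norm (F' (b, u) - F' (a, u)) < (1 - \<rho>) / 2"
      using dd[OF aT bT] by (simp add: dist_norm)
    have eq: "F' (b, u) o\<^sub>L embL = (F' (a, u) o\<^sub>L embL) + ((F' (b, u) - F' (a, u)) o\<^sub>L embL)"
      by (simp add: bounded_bilinear.diff_left[OF bounded_bilinear_blinfun_compose])
    have "norm ((F' (b, u) - F' (a, u)) o\<^sub>L embL) \<le> norm (F' (b, u) - F' (a, u)) * norm (embL :: (real^'n) \<Rightarrow>\<^sub>L ((real^'n) \<times> real))"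
      by (rule norm_blinfun_compose)
    also have "\<dots> \<le> norm (F' (b, u) - F' (a, u)) * 1"
      by (rule mult_left_mono[OF norm_embL]) simp
    finally have n2: "norm ((F' (b, u) - F' (a, u)) o\<^sub>L embL) \<le> (1 - \<rho>) / 2" using dF'' by simp
    have "norm (F' (b, u) o\<^sub>L embL) \<le> norm (F' (a, u) o\<^sub>L embL) + norm ((F' (b, u) - F' (a, u)) o\<^sub>L embL)"
      unfolding eq by (rule norm_triangle_ineq)
    also have "\<dots> \<le> \<rho> + (1 - \<rho>) / 2" by (rule add_mono[OF Fh_bound[OF a u] n2])
    finally have fin: "norm (F' (b, u) o\<^sub>L embL) \<le> \<rho> + (1 - \<rho>) / 2" .
    have "\<rho> + (1 - \<rho>) / 2 = \<rho>2" unfolding \<rho>2_def by (simp add: field_simps)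
    then show "norm (F' (b, u) o\<^sub>L embL) \<le> \<rho>2" using fin by simp
  qed
qed

definition eps where "eps = (SOME \<epsilon>. \<epsilon> > 0 \<and> (\<forall>a\<in>K. \<forall>b. dist b a < \<epsilon> \<longrightarrow> (\<forall>u\<in>range w. norm (F' (b, u) o\<^sub>L embL) \<le> \<rho>2)))"

lemma eps: "eps > 0" "a \<in> K \<Longrightarrow> dist b a < eps \<Longrightarrow> u \<in> range w \<Longrightarrow> norm (F' (b, u) o\<^sub>L embL) \<le> \<rho>2"
  using someI_ex[OF nbhd] unfolding eps_def[symmetric] by blast+

lemma contr:
  assumes a: "a \<in> K" and ab: "dist b a < eps" and u: "u \<in> range w"
  shows "norm (F (b, u) - F (a, u)) \<le> \<rho>2 * norm (b - a)"
proof (rule differentiable_bound[of "ball a eps" "\<lambda>h. F (h, u)" "\<lambda>h. blinfun_apply (F' (h, u) o\<^sub>L embL)"])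
  show "convex (ball a eps)" by simp
  show "((\<lambda>h. F (h, u)) has_derivative blinfun_apply (F' (x, u) o\<^sub>L embL)) (at x within ball a eps)" for x
    by (rule has_derivative_at_withinI[OF partial_deriv])
  show "onorm (blinfun_apply (F' (x, u) o\<^sub>L embL)) \<le> \<rho>2" if "x \<in> ball a eps" for x
    using eps(2)[OF a _ u, of x] that by (simp add: norm_blinfun.rep_eq[symmetric] dist_commute)
  show "b \<in> ball a eps" using ab by (simp add: dist_commute)
  show "a \<in> ball a eps" using eps(1) by simp
qed


primrec gs :: "nat \<Rightarrow> real^'k \<Rightarrow> real^'n" where
  "gs 0 = (\<lambda>x. h0)"
| "gs (Suc n) = (\<lambda>x. F (gs n (Psi x), w (Psi x)))"

lemma gs_K: "gs n x \<in> K"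
proof (induction n arbitrary: x)
  case 0 then show ?case using h0_in by simp
next
  case (Suc n) then show ?case using K_inv by simp
qed

lemma gs_tf: "torus_fun (gs n)"
proof (induction n)
  case 0 then show ?case by (simp add: torus_fun_def)
next
  case (Suc n)
  show ?case unfolding torus_fun_def
  proof (intro allI impI)
    fix x y :: "real^'k" assume "tequiv x y"
    then have e: "tequiv (Psi x) (Psi y)" by (rule torus_mapD[OF tPsi])
    show "gs (Suc n) x = gs (Suc n) y"
      using torus_funD[OF Suc e] torus_funD[OF tw e] by simp
  qed
qed

lemma gs_cont: "continuous_on UNIV (gs n)"
proof (induction n)
  case 0 then show ?case by simp
next
  case (Suc n)
  have "continuous_on UNIV (\<lambda>x. (gs n (Psi x), w (Psi x)))"
    by (intro continuous_on_Pair continuous_on_compose2[OF Suc cPsi] continuous_on_compose2[OF cw cPsi]) auto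
  then have "continuous_on UNIV (\<lambda>x. F (gs n (Psi x), w (Psi x)))"
    by (rule continuous_on_compose2[OF cF]) auto
  then show ?case by simp
qed

lemma traj_gs: "traj Phi w F x0 h0 n = gs n ((Phi ^^ n) x0)"
proof (induction n)
  case 0 then show ?case by simp
next
  case (Suc n)
  define z where "z = (Phi ^^ n) x0"
  have "gs (Suc n) ((Phi ^^ Suc n) x0) = F (gs n (Psi (Phi z)), w (Psi (Phi z)))"
    by (simp add: z_def)
  also have "\<dots> = F (gs n z, w z)"
    using torus_funD[OF gs_tf PsiPhi] torus_funD[OF tw PsiPhi] by simp
  finally show ?case using Suc by (simp add: z_def)
qed

lemma PhiQ_pow: "tequiv ((Phi ^^ n) y) ((Q ^^ n) y)"
proof (induction n)
  case 0 then show ?case by simp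
next
  case (Suc n)
  have "tequiv (Phi ((Phi ^^ n) y)) (Q ((Q ^^ n) y))"
    by (rule tequiv_trans[OF torus_mapD[OF tPhi Suc] PhiQ])
  then show ?case by simp
qed

lemma Q_pow_tm: "torus_map (Q ^^ n)"
proof (induction n)
  case 0 then show ?case by (simp add: torus_map_def)
next
  case (Suc n) then show ?case unfolding torus_map_def using torus_mapD[OF tQ] by simp
qed

lemma Q_pow_cont: "continuous_on UNIV (Q ^^ n)"
proof (induction n)
  case 0 then show ?case by (simp add: continuous_on_id)
next
  case (Suc n)
  have "continuous_on UNIV (\<lambda>x. Q ((Q ^^ n) x))"
    by (rule continuous_on_compose2[OF cQ Suc]) auto
  then show ?case by (simp add: o_def)
qed

lemma PsiQ: "tequiv (Psi (Q z)) z"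
proof -
  have "tequiv (Psi (Q z)) (Psi (Phi z))" by (rule torus_mapD[OF tPsi tequiv_sym[OF PhiQ]])
  then show ?thesis by (rule tequiv_trans[OF _ PsiPhi])
qed

lemma QPsi: "tequiv ((Q ^^ n) ((Psi ^^ n) x)) x"
proof (induction n)
  case 0 then show ?case by simp
next
  case (Suc n)
  define z where "z = (Psi ^^ n) x"
  have "tequiv (Q (Psi z)) (Phi (Psi z))" by (rule tequiv_sym[OF PhiQ])
  then have "tequiv (Q (Psi z)) z" by (rule tequiv_trans[OF _ PhiPsi])
  then have "tequiv ((Q ^^ n) (Q (Psi z))) ((Q ^^ n) z)" by (rule torus_mapD[OF Q_pow_tm])
  moreover have "(Q ^^ Suc n) ((Psi ^^ Suc n) x) = (Q ^^ n) (Q (Psi z))"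
  proof -
    have a: "(Psi ^^ Suc n) x = Psi z" by (simp add: z_def)
    have b: "(Q ^^ Suc n) v = (Q ^^ n) (Q v)" for v by (simp only: funpow_Suc_right comp_apply)
    show ?thesis by (simp only: a b)
  qed
  ultimately have "tequiv ((Q ^^ Suc n) ((Psi ^^ Suc n) x)) ((Q ^^ n) z)" by simp
  then show ?case unfolding z_def by (rule tequiv_trans[OF _ Suc])
qed

lemma rho2_pow: "0 \<le> \<rho>2 ^ m" "\<rho>2 ^ m \<le> 1"
  using rho2 by (simp_all add: power_le_one)

definition E where "E n y = norm (gs n ((Q ^^ n) y) - f ((Q ^^ n) y))"

lemma E_nonneg: "0 \<le> E n y" unfolding E_def by simp

lemma E_step:
  assumes "E n y < eps"
  shows "E (Suc n) y \<le> \<rho>2 * E n y"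
proof -
  define z where "z = (Q ^^ n) y"
  have g: "gs (Suc n) (Q z) = F (gs n z, w z)"
    using torus_funD[OF gs_tf PsiQ] torus_funD[OF tw PsiQ] by simp
  have ff: "f (Q z) = F (f z, w z)"
    using fPsi[of "Q z"] torus_funD[OF tf PsiQ] torus_funD[OF tw PsiQ] by simp
  have En: "E n y = norm (f z - gs n z)" unfolding E_def z_def by (simp add: norm_minus_commute)
  have "E (Suc n) y = norm (F (gs n z, w z) - F (f z, w z))"
    unfolding E_def using g ff by (simp add: z_def)
  also have "\<dots> = norm (F (f z, w z) - F (gs n z, w z))" by (simp add: norm_minus_commute)
  also have "\<dots> \<le> \<rho>2 * norm (f z - gs n z)"
    by (rule contr[OF gs_K]) (use assms En in \<open>simp_all add: dist_norm\<close>)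
  finally show ?thesis using En by simp
qed

lemma E_iter:
  assumes "E N y < eps"
  shows "E (N + m) y \<le> \<rho>2 ^ m * E N y"
proof (induction m)
  case 0 then show ?case by simp
next
  case (Suc m)
  have "\<rho>2 ^ m * E N y \<le> E N y" by (rule mult_left_le_one_le[OF E_nonneg rho2_pow])
  then have "E (N + m) y < eps" using Suc assms by linarith
  then have "E (Suc (N + m)) y \<le> \<rho>2 * E (N + m) y" by (rule E_step)
  also have "\<dots> \<le> \<rho>2 * (\<rho>2 ^ m * E N y)" using Suc rho2 by (simp add: mult_left_mono)
  finally show ?case by simp
qed

lemma E_cont: "continuous_on UNIV (E N)"
proof -
  have "continuous_on UNIV (\<lambda>y. norm (gs N ((Q ^^ N) y) - f ((Q ^^ N) y)))"
    by (intro continuous_on_norm continuous_on_diff continuous_on_compose2[OF gs_cont Q_pow_cont]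
        continuous_on_compose2[OF cf Q_pow_cont]) auto
  then show ?thesis unfolding E_def[abs_def] .
qed

lemma gs_unif: "\<exists>N. \<forall>n\<ge>N. \<forall>x. norm (gs n x - f x) < \<eta>" if "\<eta> > 0" for \<eta>
proof -
  define Op where "Op N = {y. E N y < eps}" for N
  have opn: "open (Op N)" for N unfolding Op_def
    by (rule open_Collect_less[OF E_cont continuous_on_const])
  have cov: "\<exists>N. y \<in> Op N" for y
  proof -
    have "(\<lambda>t. norm (traj Phi w F y h0 t - f ((Phi ^^ t) y))) \<longlonglongrightarrow> 0" by (rule conv[OF h0_in])
    then have "eventually (\<lambda>t. norm (traj Phi w F y h0 t - f ((Phi ^^ t) y)) < eps) sequentially"
      using eps(1) by (rule order_tendstoD(2))
    then obtain N where "norm (traj Phi w F y h0 N - f ((Phi ^^ N) y)) < eps"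
      unfolding eventually_sequentially by blast
    moreover have "traj Phi w F y h0 N = gs N ((Q ^^ N) y)"
      using traj_gs torus_funD[OF gs_tf PhiQ_pow] by simp
    moreover have "f ((Phi ^^ N) y) = f ((Q ^^ N) y)" using torus_funD[OF tf PhiQ_pow] .
    ultimately show ?thesis unfolding Op_def E_def by auto
  qed
  have cover: "cbox 0 1 \<subseteq> \<Union>(range Op)" using cov by blast
  have "\<exists>T. T \<subseteq> range Op \<and> finite T \<and> cbox 0 1 \<subseteq> \<Union>T"
  proof (rule compactE[OF compact_cbox cover])
    fix B assume "B \<in> range Op" then show "open B" using opn by auto
  next
    fix T assume "T \<subseteq> range Op" "finite T" "cbox 0 1 \<subseteq> \<Union>T"
    then show "\<exists>T. T \<subseteq> range Op \<and> finite T \<and> cbox 0 1 \<subseteq> \<Union>T" by blast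
  qed
  then obtain T where T: "T \<subseteq> range Op" "finite T" "cbox 0 1 \<subseteq> \<Union>T" by blast
  then obtain I where I: "finite I" "T = Op ` I" using finite_subset_image[OF T(2,1)] by blast
  define M where "M = Max (insert 0 I)"
  have EM_cube: "E M y < eps" if "y \<in> cbox 0 1" for y
  proof -
    from that T(3) have "y \<in> \<Union>T" by blast
    then have "y \<in> \<Union>(Op ` I)" using I(2) by simp
    then obtain N where N: "N \<in> I" "y \<in> Op N" by blast
    have "N \<le> M" unfolding M_def using N(1) I(1) by simp
    then have MN: "M = N + (M - N)" by simp
    have EN: "E N y < eps" using N(2) unfolding Op_def by simp
    have "E M y \<le> \<rho>2 ^ (M - N) * E N y" using E_iter[OF EN, of "M - N"] MN by simp
    also have "\<dots> \<le> E N y" by (rule mult_left_le_one_le[OF E_nonneg rho2_pow])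
    finally show ?thesis using EN by simp
  qed
  have EM: "E M y < eps" for y
  proof -
    have e: "tequiv ((Q ^^ M) y) ((Q ^^ M) (fv y))" by (rule torus_mapD[OF Q_pow_tm tequiv_fv])
    have "E M y = E M (fv y)" unfolding E_def
      using torus_funD[OF gs_tf e] torus_funD[OF tf e] by simp
    then show ?thesis using EM_cube[OF fv_in] by simp
  qed
  have EMm: "E (M + m) y \<le> \<rho>2 ^ m * eps" for y m
  proof -
    have "E (M + m) y \<le> \<rho>2 ^ m * E M y" by (rule E_iter[OF EM])
    also have "\<dots> \<le> \<rho>2 ^ m * eps" using EM[of y] rho2 by (simp add: mult_left_mono less_imp_le)
    finally show ?thesis .
  qed
  have gsE: "norm (gs n x - f x) = E n ((Psi ^^ n) x)" for n x
    unfolding E_def using torus_funD[OF gs_tf QPsi] torus_funD[OF tf QPsi] by simp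
  have "\<eta> / eps > 0" using that eps(1) by simp
  then obtain m where m: "\<rho>2 ^ m < \<eta> / eps"
    using real_arch_pow_inv[OF _ rho2(2)] by blast
  show ?thesis
  proof (intro exI[of _ "M + m"] allI impI)
    fix n x assume n: "M + m \<le> n"
    then have nM: "n = M + (n - M)" by simp
    have "norm (gs n x - f x) = E (M + (n - M)) ((Psi ^^ n) x)" using gsE nM by simp
    also have "\<dots> \<le> \<rho>2 ^ (n - M) * eps" by (rule EMm)
    also have "\<dots> \<le> \<rho>2 ^ m * eps"
      using n rho2 eps(1) by (intro mult_right_mono power_decreasing) auto
    also have "\<dots> < \<eta>" using m eps(1) by (simp add: pos_less_divide_eq)
    finally show "norm (gs n x - f x) < \<eta>" .
  qed
qed

end

context SS begin

primrec Ds :: "nat \<Rightarrow> real^'k \<Rightarrow> ((real^'k) \<Rightarrow>\<^sub>L (real^'n))" where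
  "Ds 0 = (\<lambda>x. 0)"
| "Ds (Suc n) = (\<lambda>x. (F' (gs n (Psi x), w (Psi x)) o\<^sub>L pairL (Ds n (Psi x)) (w' (Psi x))) o\<^sub>L Psi' x)"

lemma gs_deriv: "(gs n has_derivative blinfun_apply (Ds n x)) (at x)"
proof (induction n arbitrary: x)
  case 0
  have "blinfun_apply (0 :: (real^'k) \<Rightarrow>\<^sub>L (real^'n)) = (\<lambda>_. 0)" by (simp add: zero_blinfun.rep_eq)
  then show ?case by (simp add: has_derivative_const)
next
  case (Suc n)
  have i: "((\<lambda>x. (gs n (Psi x), w (Psi x))) has_derivative
      (\<lambda>v. (Ds n (Psi x) (Psi' x v), w' (Psi x) (Psi' x v)))) (at x)"
    by (rule has_derivative_Pair[OF has_derivative_compose[OF dPsi Suc.IH] has_derivative_compose[OF dPsi dw]])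
  have c: "((\<lambda>x. F (gs n (Psi x), w (Psi x))) has_derivative
      (\<lambda>v. F' (gs n (Psi x), w (Psi x)) (Ds n (Psi x) (Psi' x v), w' (Psi x) (Psi' x v)))) (at x)"
    by (rule has_derivative_compose[OF i dF])
  have e: "blinfun_apply (Ds (Suc n) x) = (\<lambda>v. F' (gs n (Psi x), w (Psi x)) (Ds n (Psi x) (Psi' x v), w' (Psi x) (Psi' x v)))"
    by (rule ext) simp
  show ?case unfolding e using c by simp
qed

lemma Ds_cont: "continuous_on UNIV (Ds n)"
proof (induction n)
  case 0 then show ?case by simp
next
  case (Suc n)
  have c1: "continuous_on UNIV (\<lambda>x. (gs n (Psi x), w (Psi x)))"
    by (intro continuous_on_Pair continuous_on_compose2[OF gs_cont cPsi] continuous_on_compose2[OF cw cPsi]) auto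
  have c2: "continuous_on UNIV (\<lambda>x. F' (gs n (Psi x), w (Psi x)))"
    by (rule continuous_on_compose2[OF cF' c1]) auto
  have c3: "continuous_on UNIV (\<lambda>x. Ds n (Psi x))"
    by (rule continuous_on_compose2[OF Suc cPsi]) auto
  have c4: "continuous_on UNIV (\<lambda>x. w' (Psi x))"
    by (rule continuous_on_compose2[OF cw' cPsi]) auto
  have c5: "continuous_on UNIV (\<lambda>x. pairL (Ds n (Psi x)) (w' (Psi x)))"
    unfolding pairL_def
    by (intro continuous_on_add bounded_bilinear.continuous_on[OF bounded_bilinear_blinfun_compose]
        continuous_on_const c3 c4)
  have "continuous_on UNIV (\<lambda>x. (F' (gs n (Psi x), w (Psi x)) o\<^sub>L pairL (Ds n (Psi x)) (w' (Psi x))) o\<^sub>L Psi' x)"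
    by (intro bounded_bilinear.continuous_on[OF bounded_bilinear_blinfun_compose] c2 c5 cPsi')
  then show ?case by simp
qed

lemma Wb_ex: "\<exists>b>0. \<forall>y. norm (w' y) \<le> b"
proof -
  have "compact (w' ` cbox 0 1)"
    by (rule compact_continuous_image[OF continuous_on_subset[OF cw'] compact_cbox]) simp
  then obtain b where b: "b > 0" "\<And>z. z \<in> w' ` cbox 0 1 \<Longrightarrow> norm z \<le> b"
    using compact_imp_bounded bounded_pos by metis
  have "norm (w' y) \<le> b" for y
  proof -
    have "w' y = w' (fv y)" by (rule torus_fun_deriv[OF tw dw tequiv_fv])
    then show ?thesis using b(2)[OF imageI[OF fv_in]] by simp
  qed
  with b(1) show ?thesis by blast
qed

lemma Fb_ex: "\<exists>b>0. \<forall>h\<in>K. \<forall>u\<in>range w. norm (F' (h, u)) \<le> b"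
proof -
  have "compact (F' ` (K \<times> range w))"
    by (rule compact_continuous_image[OF continuous_on_subset[OF cF'] compact_Times[OF K_compact Wc]]) simp
  then obtain b where b: "b > 0" "\<And>z. z \<in> F' ` (K \<times> range w) \<Longrightarrow> norm z \<le> b"
    using compact_imp_bounded bounded_pos by metis
  then show ?thesis by auto
qed

definition Wb where "Wb = (SOME b. b > 0 \<and> (\<forall>y. norm (w' y) \<le> b))"
definition Fb where "Fb = (SOME b. b > 0 \<and> (\<forall>h\<in>K. \<forall>u\<in>range w. norm (F' (h, u)) \<le> b))"

lemma Wb: "Wb > 0" "norm (w' y) \<le> Wb"
  using someI_ex[OF Wb_ex] unfolding Wb_def[symmetric] by blast+
lemma Fb: "Fb > 0" "h \<in> K \<Longrightarrow> u \<in> range w \<Longrightarrow> norm (F' (h, u)) \<le> Fb"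
  using someI_ex[OF Fb_ex] unfolding Fb_def[symmetric] by blast+

definition Mb where "Mb = \<kappa> * Fb * Wb / (1 - \<kappa> * \<rho>)"

lemma Mb_nonneg: "0 \<le> Mb"
  unfolding Mb_def using kappa_pos Fb(1) Wb(1) c_lt1 by simp

lemma Mb_eq: "\<kappa> * (\<rho> * Mb + Fb * Wb) = Mb"
proof -
  have "1 - \<kappa> * \<rho> \<noteq> 0" using c_lt1 by simp
  then show ?thesis unfolding Mb_def by (simp add: field_simps)
qed

lemma Ds_bound: "norm (Ds n x) \<le> Mb"
proof (induction n arbitrary: x)
  case 0 then show ?case using Mb_nonneg by simp
next
  case (Suc n)
  define A where "A = F' (gs n (Psi x), w (Psi x))"
  have uw: "w (Psi x) \<in> range w" by simp
  have a: "norm (A o\<^sub>L embL) * norm (Ds n (Psi x)) \<le> \<rho> * Mb"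
    unfolding A_def by (rule mult_mono[OF Fh_bound[OF gs_K uw] Suc rho_nonneg norm_ge_zero])
  have b: "norm A * norm (w' (Psi x)) \<le> Fb * Wb"
    unfolding A_def by (rule mult_mono[OF Fb(2)[OF gs_K uw] Wb(2) less_imp_le[OF Fb(1)] norm_ge_zero])
  have "norm (Ds (Suc n) x) \<le> norm (Psi' x) * (norm (A o\<^sub>L embL) * norm (Ds n (Psi x)) + norm A * norm (w' (Psi x)))"
    unfolding A_def Ds.simps by (rule norm_comp_pair_bound)
  also have "\<dots> \<le> \<kappa> * (\<rho> * Mb + Fb * Wb)"
    by (rule mult_mono[OF nPsi' add_mono[OF a b]]) (use kappa_pos in simp_all)
  also have "\<dots> = Mb" by (rule Mb_eq)
  finally show ?case .
qed

lemma Ds_diff: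
  "norm (Ds (Suc n) x - Ds (Suc m) x) \<le> \<kappa> * (\<rho> * norm (Ds n (Psi x) - Ds m (Psi x))
     + norm (F' (gs n (Psi x), w (Psi x)) - F' (gs m (Psi x), w (Psi x))) * (Mb + Wb))"
proof -
  define A where "A = F' (gs n (Psi x), w (Psi x))"
  define B where "B = F' (gs m (Psi x), w (Psi x))"
  have uw: "w (Psi x) \<in> range w" by simp
  have a: "norm (A o\<^sub>L embL) * norm (Ds n (Psi x) - Ds m (Psi x)) \<le> \<rho> * norm (Ds n (Psi x) - Ds m (Psi x))"
    unfolding A_def by (rule mult_right_mono[OF Fh_bound[OF gs_K uw] norm_ge_zero])
  have b: "norm (A - B) * (norm (Ds m (Psi x)) + norm (w' (Psi x))) \<le> norm (A - B) * (Mb + Wb)"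
    by (rule mult_left_mono[OF add_mono[OF Ds_bound Wb(2)] norm_ge_zero])
  have "norm (Ds (Suc n) x - Ds (Suc m) x) \<le> norm (Psi' x) * (norm (A o\<^sub>L embL) * norm (Ds n (Psi x) - Ds m (Psi x))
      + norm (A - B) * (norm (Ds m (Psi x)) + norm (w' (Psi x))))"
    unfolding A_def B_def Ds.simps by (rule norm_comp_pair_diff)
  also have "\<dots> \<le> \<kappa> * (\<rho> * norm (Ds n (Psi x) - Ds m (Psi x)) + norm (A - B) * (Mb + Wb))"
    by (rule mult_mono[OF nPsi' add_mono[OF a b]]) (use kappa_pos rho_nonneg Mb_nonneg Wb(1) in simp_all)
  finally show ?thesis unfolding A_def B_def .
qed

lemma F'_close: "\<exists>N. \<forall>n\<ge>N. \<forall>m\<ge>N. \<forall>x. norm (F' (gs n x, w x) - F' (gs m x, w x)) \<le> \<eta>" if eta: "\<eta> > 0" for \<eta>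
proof -
  have "uniformly_continuous_on (K \<times> range w) F'"
    by (rule compact_uniformly_continuous[OF continuous_on_subset[OF cF'] compact_Times[OF K_compact Wc]]) simp
  then obtain d where d: "d > 0"
    and dd: "\<And>p q. p \<in> K \<times> range w \<Longrightarrow> q \<in> K \<times> range w \<Longrightarrow> dist q p < d \<Longrightarrow> dist (F' q) (F' p) < \<eta>"
    unfolding uniformly_continuous_on_def using eta by metis
  obtain N where N: "\<And>n x. n \<ge> N \<Longrightarrow> norm (gs n x - f x) < d / 2"
    using gs_unif[of "d / 2"] d by auto
  show ?thesis
  proof (intro exI[of _ N] allI impI)
    fix n m x assume n: "N \<le> n" and m: "N \<le> m"
    have "dist (gs n x) (gs m x) \<le> dist (gs n x) (f x) + dist (gs m x) (f x)" by (rule dist_triangle2)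
    also have "\<dots> < d / 2 + d / 2"
      using N[OF n, of x] N[OF m, of x] by (intro add_strict_mono) (simp_all add: dist_norm)
    finally have "dist (gs n x, w x) (gs m x, w x) < d" by (simp add: dist_Pair_Pair)
    then have "dist (F' (gs n x, w x)) (F' (gs m x, w x)) < \<eta>"
      by (intro dd) (auto simp: gs_K)
    then show "norm (F' (gs n x, w x) - F' (gs m x, w x)) \<le> \<eta>" by (simp add: dist_norm)
  qed
qed

end

context SS begin

lemma Ds_cauchy: "\<exists>N. \<forall>n m x. N \<le> n \<and> N \<le> m \<longrightarrow> dist (Ds n x) (Ds m x) < e" if e: "e > 0" for e
proof -
  define c where "c = \<kappa> * \<rho>"
  have c: "0 \<le> c" "c < 1" unfolding c_def using kappa_pos rho_nonneg c_lt1 by simp_all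
  define C1 where "C1 = \<kappa> * (Mb + Wb)"
  have C1: "0 \<le> C1" unfolding C1_def using kappa_pos Mb_nonneg Wb(1) by simp
  define X where "X = e / 4 / (C1 + 1)"
  have nz: "C1 + 1 \<noteq> 0" "1 - c \<noteq> 0" using C1 c by auto
  have X: "X > 0" unfolding X_def using e C1 by simp
  have X4: "(C1 + 1) * X = e / 4"
  proof -
    have "(C1 + 1) * X = (C1 + 1) * (e / 4) / (C1 + 1)" unfolding X_def by (rule times_divide_eq_right)
    also have "\<dots> = e / 4" by (rule nonzero_mult_div_cancel_left[OF nz(1)])
    finally show ?thesis .
  qed
  define \<eta> where "\<eta> = (1 - c) * X"
  have eta: "\<eta> > 0" unfolding \<eta>_def using X c by simp
  define B where "B = C1 * \<eta> / (1 - c)"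
  have BX: "B = C1 * X" unfolding B_def \<eta>_def using nz by simp
  have B: "B < e / 4" "0 \<le> B"
  proof -
    have "C1 * X < (C1 + 1) * X" using X by simp
    then show "B < e / 4" using BX X4 by simp
    show "0 \<le> B" using BX C1 X by simp
  qed
  have Beq: "c * B + C1 * \<eta> = B" unfolding BX \<eta>_def by (simp add: algebra_simps)
  obtain N0 where N0: "\<And>n m x. N0 \<le> n \<Longrightarrow> N0 \<le> m \<Longrightarrow> norm (F' (gs n x, w x) - F' (gs m x, w x)) \<le> \<eta>"
    using F'_close[OF eta] by blast
  have "e / (2 * (2 * Mb + 1)) > 0" using e Mb_nonneg by simp
  then obtain J where J: "c ^ J < e / (2 * (2 * Mb + 1))" using real_arch_pow_inv[OF _ c(2)] by blast
  have claim: "\<And>n m x. N0 \<le> n \<Longrightarrow> N0 \<le> m \<Longrightarrow> norm (Ds (n + j) x - Ds (m + j) x) \<le> c ^ j * (2 * Mb) + B" for j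
  proof (induction j)
    case 0
    have "norm (Ds n x - Ds m x) \<le> norm (Ds n x) + norm (Ds m x)" by (rule norm_triangle_ineq4)
    also have "\<dots> \<le> 2 * Mb" using Ds_bound[of n x] Ds_bound[of m x] by simp
    finally show ?case using B(2) by simp
  next
    case (Suc j)
    have "norm (Ds (Suc (n + j)) x - Ds (Suc (m + j)) x) \<le> \<kappa> * (\<rho> * norm (Ds (n + j) (Psi x) - Ds (m + j) (Psi x))
     + norm (F' (gs (n + j) (Psi x), w (Psi x)) - F' (gs (m + j) (Psi x), w (Psi x))) * (Mb + Wb))"
      by (rule Ds_diff)
    also have "\<dots> \<le> \<kappa> * (\<rho> * (c ^ j * (2 * Mb) + B) + \<eta> * (Mb + Wb))"
    proof -
      have a: "\<rho> * norm (Ds (n + j) (Psi x) - Ds (m + j) (Psi x)) \<le> \<rho> * (c ^ j * (2 * Mb) + B)"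
        by (rule mult_left_mono[OF Suc.IH[OF Suc.prems] rho_nonneg])
      have b: "norm (F' (gs (n + j) (Psi x), w (Psi x)) - F' (gs (m + j) (Psi x), w (Psi x))) * (Mb + Wb) \<le> \<eta> * (Mb + Wb)"
        by (rule mult_right_mono[OF N0]) (use Suc.prems Mb_nonneg Wb(1) in auto)
      show ?thesis by (rule mult_left_mono[OF add_mono[OF a b]]) (use kappa_pos in simp)
    qed
    also have "\<dots> = c ^ Suc j * (2 * Mb) + (c * B + C1 * \<eta>)"
      unfolding c_def C1_def by (simp add: algebra_simps)
    also have "\<dots> = c ^ Suc j * (2 * Mb) + B" using Beq by simp
    finally show ?case by simp
  qed
  show ?thesis
  proof (intro exI[of _ "N0 + J"] allI impI)
    fix n m x assume nm: "N0 + J \<le> n \<and> N0 + J \<le> m"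
    then have eqs: "n = (n - J) + J" "m = (m - J) + J" by simp_all
    have "norm (Ds ((n - J) + J) x - Ds ((m - J) + J) x) \<le> c ^ J * (2 * Mb) + B"
      by (rule claim) (use nm in arith)+
    also have "c ^ J * (2 * Mb) \<le> c ^ J * (2 * Mb + 1)"
      by (rule mult_left_mono) (use c in simp_all)
    also have "c ^ J * (2 * Mb + 1) < e / 2"
      using J Mb_nonneg by (simp add: field_simps)
    finally have "norm (Ds n x - Ds m x) < e / 2 + B" using eqs by simp
    then show "dist (Ds n x) (Ds m x) < e" using B(1) e by (simp add: dist_norm)
  qed
qed

lemma f_C1: "C1_map f"
proof -
  have "\<exists>l. \<forall>e>0. \<exists>N. \<forall>n x. N \<le> n \<and> True \<longrightarrow> dist (Ds n x) (l x) < e"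
    unfolding uniformly_convergent_eq_cauchy using Ds_cauchy by simp
  then obtain l where l: "\<And>e. e > 0 \<Longrightarrow> \<exists>N. \<forall>n x. N \<le> n \<longrightarrow> dist (Ds n x) (l x) < e" by auto
  have gs_lim: "(\<lambda>n. gs n x) \<longlonglongrightarrow> f x" for x
  proof (rule LIMSEQ_I)
    fix r :: real assume "r > 0"
    then obtain N where "\<forall>n\<ge>N. \<forall>x. norm (gs n x - f x) < r" using gs_unif by blast
    then show "\<exists>no. \<forall>n\<ge>no. norm (gs n x - f x) < r" by blast
  qed
  have "\<exists>g. \<forall>x\<in>UNIV. (\<lambda>n. gs n x) \<longlonglongrightarrow> g x \<and> (g has_derivative blinfun_apply (l x)) (at x within UNIV)"
  proof (rule has_derivative_sequence[where f' = "\<lambda>n x. blinfun_apply (Ds n x)"])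
    show "convex (UNIV :: (real^'k) set)" by simp
    show "(gs n has_derivative blinfun_apply (Ds n x)) (at x within UNIV)" for n x
      using gs_deriv by simp
    show "\<forall>\<^sub>F n in sequentially. \<forall>x\<in>UNIV. \<forall>h. norm (blinfun_apply (Ds n x) h - blinfun_apply (l x) h) \<le> e * norm h"
      if epos: "e > 0" for e
    proof -
      obtain N where N: "\<forall>n x. N \<le> n \<longrightarrow> dist (Ds n x) (l x) < e" using l[OF epos] by blast
      show ?thesis unfolding eventually_sequentially
      proof (intro exI[of _ N] allI impI ballI)
        fix n x h assume n: "N \<le> n"
        have "norm (blinfun_apply (Ds n x) h - blinfun_apply (l x) h) = norm (blinfun_apply (Ds n x - l x) h)"
          by (simp add: blinfun.diff_left)
        also have "\<dots> \<le> norm (Ds n x - l x) * norm h" by (rule norm_blinfun)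
        also have "\<dots> \<le> e * norm h"
          using N n by (intro mult_right_mono) (auto simp: dist_norm less_imp_le)
        finally show "norm (blinfun_apply (Ds n x) h - blinfun_apply (l x) h) \<le> e * norm h" .
      qed
    qed
    show "(0::real^'k) \<in> UNIV" by simp
    show "(\<lambda>n. gs n 0) \<longlonglongrightarrow> f 0" by (rule gs_lim)
  qed
  then obtain g where g: "\<And>x. (\<lambda>n. gs n x) \<longlonglongrightarrow> g x" "\<And>x. (g has_derivative blinfun_apply (l x)) (at x)"
    by auto
  have "g = f" using LIMSEQ_unique[OF g(1) gs_lim] by auto
  then have fd: "\<And>x. (f has_derivative blinfun_apply (l x)) (at x)" using g(2) by simp
  have ul: "uniform_limit UNIV Ds l sequentially"
    unfolding uniform_limit_sequentially_iff using l by blast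
  have ev: "\<forall>\<^sub>F n in sequentially. continuous_on UNIV (Ds n)"
    using Ds_cont by (simp add: always_eventually)
  have "continuous_on UNIV l"
    by (rule uniform_limit_theorem[OF ev ul]) simp
  then show ?thesis unfolding C1_map_def using fd by blast
qed

end

theorem proposition2:
  fixes Phi Psi :: "real^'k \<Rightarrow> real^'k"
    and w :: "real^'k \<Rightarrow> real"
    and F :: "(real^'n) \<times> real \<Rightarrow> real^'n"
    and \<kappa> \<rho> :: real and K :: "(real^'n) set"
  assumes "regular_base_system Phi"
    and "torus_map Psi" and "\<forall>x. tequiv (Psi (Phi x)) x" and "\<forall>x. tequiv (Phi (Psi x)) x"
    and "\<forall>x. Psi differentiable (at x)"
    and "\<kappa> \<ge> 1" and "\<forall>x. onorm (frechet_derivative Psi (at x)) \<le> \<kappa>"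
    and "torus_fun w" and "C2_map w"
    and "C2_map F"
    and "ESP F (range w) \<rho> K" and "\<rho> < 1 / \<kappa>"
  shows "\<forall>f. sync_function Phi w F K f \<longrightarrow> C1_map f"
proof (intro allI impI)
  fix f assume sync: "sync_function Phi w F K f"
  obtain Q Psi' where Q: "continuous_on UNIV Q" "torus_map Q" "\<forall>x. tequiv (Phi x) (Q x)"
    and dPsi: "\<forall>x. (Psi has_derivative blinfun_apply (Psi' x)) (at x)" and cPsi': "continuous_on UNIV Psi'"
    using base_setup[OF assms(1) assms(2) assms(3) assms(5)] by blast
  obtain w' where dw: "\<forall>x. (w has_derivative blinfun_apply (w' x)) (at x)" "continuous_on UNIV w'"
    using C2_imp_C1[OF assms(9)] by blast
  obtain F' where dF: "\<forall>x. (F has_derivative blinfun_apply (F' x)) (at x)" "continuous_on UNIV F'"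
    using C2_imp_C1[OF assms(10)] by blast
  have nPsi': "norm (Psi' x) \<le> \<kappa>" for x
  proof -
    have "blinfun_apply (Psi' x) = frechet_derivative Psi (at x)"
      by (rule frechet_derivative_at[OF dPsi[rule_format]])
    then show ?thesis using assms(7) by (simp add: norm_blinfun.rep_eq)
  qed
  have tPhi: "torus_map Phi" using assms(1) unfolding regular_base_system_def by blast
  interpret SS Phi Psi w F \<kappa> \<rho> K f Q Psi' w' F'
    by unfold_locales (simp_all add: tPhi assms Q dPsi cPsi' nPsi' dw dF sync)
  show "C1_map f" by (rule f_C1)
qed

end
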